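(* Let $p(L,M,D;\mu=1)$ be a generative reasoning model, let $\alpha\in L$, and let $\Delta\subseteq L$ be a finite set such that $[\![\Delta]\!]=[\![\Delta]\!]_p$ and $[\![\Delta]\!]\neq\emptyset$. Then $p(\alpha\mid\Delta)=1$ if and only if $\Delta\models\alpha$.
   Context: Fix a multiset of data $\{d_1,\dots,d_K\}$ with $K\ge1$, and a propositional language $L$ over finitely many atoms, with set of models (truth assignments) $\mathcal M$. A function $m:\{d_1,\dots,d_K\}\to\mathcal M$ assigns to each datum the model it supports. The probability of a model $n$ is $p(n)=|\{k:m(d_k)=n\}|/K$. For a parameter $\mu\in[0,1]$ and $\alpha\in L$, set $p(\alpha\mid m)=\mu$ if $m$ satisfies $\alpha$ and $1-\mu$ otherwise. For finite $\Delta\subseteq L$, set $p(\Delta\mid m)=\prod_{\beta\in\Delta}p(\beta\mid m)$, which is $1$ for empty $\Delta$. Define $$p(\alpha\mid\Delta)=\frac{\sum_{m}p(\alpha\mid m)p(\Delta\mid m)p(m)}{\sum_m p(\Delta\mid m)p(m)}.$$ This is the generative reasoning model $p(L,M,D;\mu)$. For $\mu=1$ the expression is evaluated at $\mu=1$, and it is undefined when the denominator is $0$. Notation: - $[\![\Delta]\!]$ is the set of models satisfying every formula in $\Delta$, and $[\![\alpha]\!]=[\![\{\alpha\}]\!]$. - $[\![\Delta]\!]_p=\{m\in[\![\Delta]\!]:p(m)\neq0\}$. - $\Delta\models\alpha$ (classical consequence) means $[\![\Delta]\!]\subseteq[\![\alpha]\!]$. *)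

theory Defs
  imports Complex_Main "HOL-Library.Multiset"
begin

datatype 'a form =
    Atom 'a | Bot | Neg "'a form" | Conj "'a form" "'a form"
  | Disj "'a form" "'a form" | Imp "'a form" "'a form"

type_synonym 'a model = "'a \<Rightarrow> bool"

fun sat :: "'a model \<Rightarrow> 'a form \<Rightarrow> bool" where
  "sat v (Atom a) = v a"
| "sat v Bot = False"
| "sat v (Neg f) = (\<not> sat v f)"
| "sat v (Conj f g) = (sat v f \<and> sat v g)"
| "sat v (Disj f g) = (sat v f \<or> sat v g)"
| "sat v (Imp f g) = (sat v f \<longrightarrow> sat v g)"

definition models :: "'a form set \<Rightarrow> 'a model set" where
  "models \<Delta> = {v. \<forall>\<beta>\<in>\<Delta>. sat v \<beta>}"

definition models1 :: "'a form \<Rightarrow> 'a model set" where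
  "models1 \<alpha> = models {\<alpha>}"

definition pM :: "'d multiset \<Rightarrow> ('d \<Rightarrow> 'a model) \<Rightarrow> 'a model \<Rightarrow> real" where
  "pM D m n = real (size (filter_mset (\<lambda>d. m d = n) D)) / real (size D)"

definition models_p :: "'d multiset \<Rightarrow> ('d \<Rightarrow> 'a model) \<Rightarrow> 'a form set \<Rightarrow> 'a model set" where
  "models_p D m \<Delta> = {v \<in> models \<Delta>. pM D m v \<noteq> 0}"

definition entails :: "'a form set \<Rightarrow> 'a form \<Rightarrow> bool" where
  "entails \<Delta> \<alpha> \<longleftrightarrow> models \<Delta> \<subseteq> models1 \<alpha>"

definition p_form_model :: "real \<Rightarrow> 'a form \<Rightarrow> 'a model \<Rightarrow> real" where
  "p_form_model \<mu> \<alpha> v = (if sat v \<alpha> then \<mu> else 1 - \<mu>)"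

definition p_set_model :: "real \<Rightarrow> 'a form set \<Rightarrow> 'a model \<Rightarrow> real" where
  "p_set_model \<mu> \<Delta> v = (\<Prod>\<beta>\<in>\<Delta>. p_form_model \<mu> \<beta> v)"

text \<open>p(alpha | Delta) in the generative reasoning model p(L,M,D;mu).
  (Isabelle's division by 0 yields 0; the paper leaves it undefined.)\<close>
definition p_cond :: "real \<Rightarrow> 'd multiset \<Rightarrow> ('d \<Rightarrow> ('a::finite) model) \<Rightarrow> 'a form \<Rightarrow> 'a form set \<Rightarrow> real" where
  "p_cond \<mu> D m \<alpha> \<Delta> =
     (\<Sum>v\<in>UNIV. p_form_model \<mu> \<alpha> v * p_set_model \<mu> \<Delta> v * pM D m v) /
     (\<Sum>v\<in>UNIV. p_set_model \<mu> \<Delta> v * pM D m v)"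

end

theory Submission
  imports Defs
begin

lemma psm1:
  assumes "finite \<Delta>"
  shows "p_set_model 1 \<Delta> v = (if v \<in> models \<Delta> then 1 else 0)"
proof (cases "v \<in> models \<Delta>")
  case True
  then have "\<forall>\<beta>\<in>\<Delta>. p_form_model 1 \<beta> v = 1"
    by (auto simp: models_def p_form_model_def)
  then show ?thesis using True by (simp add: p_set_model_def)
next
  case False
  then obtain \<beta> where "\<beta> \<in> \<Delta>" "\<not> sat v \<beta>" by (auto simp: models_def)
  then have "p_form_model 1 \<beta> v = 0" by (simp add: p_form_model_def)
  then show ?thesis using False assms \<open>\<beta> \<in> \<Delta>\<close>
    by (simp add: p_set_model_def prod_zero_iff) blast
qed

lemma pM_nonneg: "pM D m v \<ge> 0"
  by (simp add: pM_def)

theorem corollary1: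
  fixes D :: "'d multiset" and m :: "'d \<Rightarrow> ('a::finite) model"
    and \<alpha> :: "'a form" and \<Delta> :: "'a form set"
  assumes "D \<noteq> {#}"
    and "finite \<Delta>"
    and "models \<Delta> = models_p D m \<Delta>"
    and "models \<Delta> \<noteq> {}"
  shows "p_cond 1 D m \<alpha> \<Delta> = 1 \<longleftrightarrow> entails \<Delta> \<alpha>"
proof -
  let ?S = "models \<Delta>"
  let ?A = "{v. sat v \<alpha>}"
  have pos: "pM D m v > 0" if "v \<in> ?S" for v
  proof -
    have "v \<in> models_p D m \<Delta>" using that assms(3) by simp
    then have "pM D m v \<noteq> 0" by (simp add: models_p_def)
    then show ?thesis using pM_nonneg[of D m v] by linarith
  qed
  have num: "(\<Sum>v\<in>UNIV. p_form_model 1 \<alpha> v * p_set_model 1 \<Delta> v * pM D m v)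
      = (\<Sum>v\<in>?S \<inter> ?A. pM D m v)"
  proof -
    have "(\<Sum>v\<in>?S \<inter> ?A. pM D m v) = (\<Sum>v\<in>UNIV. if v \<in> ?S \<inter> ?A then pM D m v else 0)"
      by (rule sum.inter_restrict[where A=UNIV, simplified]) simp
    also have "\<dots> = (\<Sum>v\<in>UNIV. p_form_model 1 \<alpha> v * p_set_model 1 \<Delta> v * pM D m v)"
      by (rule sum.cong) (auto simp: psm1[OF assms(2)] p_form_model_def)
    finally show ?thesis by simp
  qed
  have den: "(\<Sum>v\<in>UNIV. p_set_model 1 \<Delta> v * pM D m v) = (\<Sum>v\<in>?S. pM D m v)"
  proof -
    have "(\<Sum>v\<in>UNIV \<inter> ?S. pM D m v) = (\<Sum>v\<in>UNIV. if v \<in> ?S then pM D m v else 0)"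
      by (rule sum.inter_restrict) simp
    also have "\<dots> = (\<Sum>v\<in>UNIV. p_set_model 1 \<Delta> v * pM D m v)"
      by (rule sum.cong) (auto simp: psm1[OF assms(2)])
    finally show ?thesis by simp
  qed
  have split: "(\<Sum>v\<in>?S. pM D m v) = (\<Sum>v\<in>?S \<inter> ?A. pM D m v) + (\<Sum>v\<in>?S - ?A. pM D m v)"
    by (rule sum.Int_Diff) simp
  obtain v0 where v0: "v0 \<in> ?S" using assms(4) by blast
  have Tpos: "(\<Sum>v\<in>?S. pM D m v) > 0"
    using assms(4) pos by (intro sum_pos) auto
  have "p_cond 1 D m \<alpha> \<Delta> = 1 \<longleftrightarrow> (\<Sum>v\<in>?S - ?A. pM D m v) = 0"
    using Tpos split by (simp add: p_cond_def num den)
  also have "\<dots> \<longleftrightarrow> ?S - ?A = {}"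
  proof -
    have "(\<Sum>v\<in>?S - ?A. pM D m v) = 0 \<longleftrightarrow> (\<forall>x\<in>?S - ?A. pM D m x = 0)"
      by (rule sum_nonneg_eq_0_iff) (auto simp: pM_nonneg)
    also have "\<dots> \<longleftrightarrow> ?S - ?A = {}"
      using pos by (metis Diff_iff equals0D equals0I less_irrefl)
    finally show ?thesis .
  qed
  also have "\<dots> \<longleftrightarrow> entails \<Delta> \<alpha>"
    by (auto simp: entails_def models1_def models_def)
  finally show ?thesis .
qed

end
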